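(* Let $(H,+,\circ)$ be a commutative multiplicative hyperring with identity $1$, and let $P$ be an sdf-absorbing strong $\mathcal{C}$-hyperideal of $H$. Then the following are equivalent: (i) whenever $0\neq x,y\in H$ and $x^2-y^2\subseteq P$, both $x-y\in P$ and $x+y\in P$; (ii) $1+1\in P$; (iii) the quotient hyperring $H/P$ is of characteristic $2$.
   Context: A commutative multiplicative hyperring $(H,+,\circ)$ consists of an abelian group $(H,+)$ and an associative, commutative hyperoperation $\circ: H\times H\to P^*(H)$ with $x\circ(y+z)\subseteq x\circ y+x\circ z$ and $x\circ(-y)=-(x\circ y)=(-x)\circ y$. For subsets $A,B$, $A\circ B=\bigcup_{a\in A,b\in B}a\circ b$, $A\pm B=\{a\pm b\}$; $x^2=x\circ x$. Identity: $x\in x\circ 1$ for all $x$. A hyperideal is a nonempty $P$ with $x-y\in P$ and $r\circ x\subseteq P$ for $x,y\in P$, $r\in H$. The quotient $H/P=\{x+P\}$ has the usual coset addition and $(x+P)*(y+P)=\{z+P: z\in x\circ y\}$. A hyperring has characteristic $\alpha$ if $\alpha$ is the least positive integer with $\alpha x=0$ for all $x$. Let $\mathcal{C}=\{c_1\circ\cdots\circ c_n: c_i\in H,n\in\mathbb{N}\}$ and $\mathfrak{C}=\{\sum_{i=1}^n C_i: C_i\in\mathcal{C}\}$; $P$ is a strong $\mathcal{C}$-hyperideal if for every $D\in\mathfrak{C}$, $D\cap P\neq\varnothing$ implies $D\subseteq P$. A proper hyperideal $P$ is sdf-absorbing if whenever $0\neq x,y\in H$ and $x^2-y^2\subseteq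 P$, then $x-y\in P$ or $x+y\in P$. *)

theory Defs
  imports Main
begin

definition set_plus_h :: "'a::ab_group_add set \<Rightarrow> 'a set \<Rightarrow> 'a set" where
  "set_plus_h A B = {a + b | a b. a \<in> A \<and> b \<in> B}"

definition set_minus_h :: "'a::ab_group_add set \<Rightarrow> 'a set \<Rightarrow> 'a set" where
  "set_minus_h A B = {a - b | a b. a \<in> A \<and> b \<in> B}"

definition hset_mult :: "('a \<Rightarrow> 'a \<Rightarrow> 'a set) \<Rightarrow> 'a set \<Rightarrow> 'a set \<Rightarrow> 'a set" where
  "hset_mult m A B = (\<Union>a\<in>A. \<Union>b\<in>B. m a b)"

definition comm_mult_hyperring :: "('a::ab_group_add \<Rightarrow> 'a \<Rightarrow> 'a set) \<Rightarrow> bool" where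
  "comm_mult_hyperring m \<longleftrightarrow>
     (\<forall>x y. m x y \<noteq> {}) \<and>
     (\<forall>x y z. hset_mult m {x} (m y z) = hset_mult m (m x y) {z}) \<and>
     (\<forall>x y. m x y = m y x) \<and>
     (\<forall>x y z. m x (y + z) \<subseteq> set_plus_h (m x y) (m x z)) \<and>
     (\<forall>x y. m x (- y) = uminus ` (m x y) \<and> m (- x) y = uminus ` (m x y))"

definition hyperring_identity :: "('a \<Rightarrow> 'a \<Rightarrow> 'a set) \<Rightarrow> 'a \<Rightarrow> bool" where
  "hyperring_identity m e \<longleftrightarrow> (\<forall>x. x \<in> m x e)"

definition hyperideal :: "('a::ab_group_add \<Rightarrow> 'a \<Rightarrow> 'a set) \<Rightarrow> 'a set \<Rightarrow> bool" where
  "hyperideal m P \<longleftrightarrow> P \<noteq> {} \<and> (\<forall>x\<in>P. \<forall>y\<in>P. x - y \<in> P) \<and> (\<forall>r x. x \<in> P \<longrightarrow> m r x \<subseteq> P)"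

inductive hprod :: "('a \<Rightarrow> 'a \<Rightarrow> 'a set) \<Rightarrow> 'a set \<Rightarrow> bool" for m where
  single: "hprod m {c}"
| step: "hprod m A \<Longrightarrow> hprod m (hset_mult m A {c})"

inductive hsum :: "('a::ab_group_add \<Rightarrow> 'a \<Rightarrow> 'a set) \<Rightarrow> 'a set \<Rightarrow> bool" for m where
  base: "hprod m A \<Longrightarrow> hsum m A"
| step: "hsum m D \<Longrightarrow> hprod m A \<Longrightarrow> hsum m (set_plus_h D A)"

definition strong_C_hyperideal :: "('a::ab_group_add \<Rightarrow> 'a \<Rightarrow> 'a set) \<Rightarrow> 'a set \<Rightarrow> bool" where
  "strong_C_hyperideal m P \<longleftrightarrow> hyperideal m P \<and>
     (\<forall>D. hsum m D \<longrightarrow> D \<inter> P \<noteq> {} \<longrightarrow> D \<subseteq> P)"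

definition sdf_absorbing :: "('a::ab_group_add \<Rightarrow> 'a \<Rightarrow> 'a set) \<Rightarrow> 'a set \<Rightarrow> bool" where
  "sdf_absorbing m P \<longleftrightarrow> hyperideal m P \<and> P \<noteq> UNIV \<and>
     (\<forall>x y. x \<noteq> 0 \<longrightarrow> y \<noteq> 0 \<longrightarrow> set_minus_h (m x x) (m y y) \<subseteq> P \<longrightarrow>
        x - y \<in> P \<or> x + y \<in> P)"

definition nsmul_gen :: "('b \<Rightarrow> 'b \<Rightarrow> 'b) \<Rightarrow> 'b \<Rightarrow> nat \<Rightarrow> 'b \<Rightarrow> 'b" where
  "nsmul_gen add z n x = ((\<lambda>y. add x y) ^^ n) z"

definition has_char :: "'b set \<Rightarrow> ('b \<Rightarrow> 'b \<Rightarrow> 'b) \<Rightarrow> 'b \<Rightarrow> nat \<Rightarrow> bool" where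
  "has_char C add z \<alpha> \<longleftrightarrow> 0 < \<alpha> \<and> (\<forall>x\<in>C. nsmul_gen add z \<alpha> x = z) \<and>
     (\<forall>\<beta>. 0 < \<beta> \<and> \<beta> < \<alpha> \<longrightarrow> \<not> (\<forall>x\<in>C. nsmul_gen add z \<beta> x = z))"

definition coset :: "'a::ab_group_add set \<Rightarrow> 'a \<Rightarrow> 'a set" where
  "coset P x = {x + p | p. p \<in> P}"

text \<open>Quotient H/P: carrier {x+P}, coset addition (x+P)+(y+P) = (x+y)+P, zero 0+P.
  The hypermultiplication of H/P does not affect its characteristic.\<close>
definition quot_carrier :: "'a::ab_group_add set \<Rightarrow> 'a set set" where
  "quot_carrier P = range (coset P)"

definition quot_add :: "'a::ab_group_add set \<Rightarrow> 'a set \<Rightarrow> 'a set \<Rightarrow> 'a set" where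
  "quot_add P A B = set_plus_h A B"

end

theory Submission
  imports Defs
begin

lemma hi_basic:
  assumes "hyperideal m P"
  shows "0 \<in> P" "\<And>x. x \<in> P \<Longrightarrow> - x \<in> P" "\<And>x y. x \<in> P \<Longrightarrow> y \<in> P \<Longrightarrow> x + y \<in> P"
    "\<And>x y. x \<in> P \<Longrightarrow> y \<in> P \<Longrightarrow> x - y \<in> P"
proof -
  have ne: "P \<noteq> {}" and sub: "\<forall>x\<in>P. \<forall>y\<in>P. x - y \<in> P" using assms unfolding hyperideal_def by auto
  then obtain p where "p \<in> P" by auto
  then show z: "0 \<in> P" using sub by force
  show n: "\<And>x. x \<in> P \<Longrightarrow> - x \<in> P" using sub z by (metis diff_0)
  show "\<And>x y. x \<in> P \<Longrightarrow> y \<in> P \<Longrightarrow> x + y \<in> P" using sub n by (metis diff_minus_eq_add)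
  show "\<And>x y. x \<in> P \<Longrightarrow> y \<in> P \<Longrightarrow> x - y \<in> P" using sub by auto
qed

lemma coset_plus:
  assumes "hyperideal m P"
  shows "set_plus_h (coset P a) (coset P b) = coset P (a + b)"
proof -
  note h = hi_basic[OF assms]
  show ?thesis
  proof (rule set_eqI, rule iffI)
    fix z assume "z \<in> set_plus_h (coset P a) (coset P b)"
    then obtain p q where "p \<in> P" "q \<in> P" "z = (a + p) + (b + q)"
      unfolding set_plus_h_def coset_def by auto
    then show "z \<in> coset P (a + b)" unfolding coset_def
      by (intro CollectI exI[of _ "p + q"]) (auto simp: algebra_simps h)
  next
    fix z assume "z \<in> coset P (a + b)"
    then obtain p where "p \<in> P" "z = a + b + p" unfolding coset_def by auto
    then show "z \<in> set_plus_h (coset P a) (coset P b)" unfolding coset_def set_plus_h_def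
      using h(1) by (intro CollectI exI[of _ "a + p"] exI[of _ "b + 0"]) (auto simp: algebra_simps)
  qed
qed

lemma coset_zero_iff:
  assumes "hyperideal m P"
  shows "coset P a = coset P 0 \<longleftrightarrow> a \<in> P"
proof
  note h = hi_basic[OF assms]
  assume "coset P a = coset P 0"
  moreover have "a \<in> coset P a" unfolding coset_def using h(1) by (auto intro: exI[of _ 0])
  ultimately show "a \<in> P" unfolding coset_def by auto
next
  note h = hi_basic[OF assms]
  assume a: "a \<in> P"
  show "coset P a = coset P 0"
  proof (rule set_eqI, rule iffI)
    fix z assume "z \<in> coset P a" then show "z \<in> coset P 0" unfolding coset_def using a h
      by auto
  next
    fix z assume "z \<in> coset P 0" then obtain p where "p \<in> P" "z = p" unfolding coset_def by auto
    then show "z \<in> coset P a" unfolding coset_def using a h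
      by (intro CollectI exI[of _ "p - a"]) auto
  qed
qed

theorem mainTheorem3:
  fixes m :: "'a::ab_group_add \<Rightarrow> 'a \<Rightarrow> 'a set" and one :: 'a and P :: "'a set"
  assumes "comm_mult_hyperring m"
    and "hyperring_identity m one"
    and "sdf_absorbing m P"
    and "strong_C_hyperideal m P"
  shows "((\<forall>x y. x \<noteq> 0 \<longrightarrow> y \<noteq> 0 \<longrightarrow> set_minus_h (m x x) (m y y) \<subseteq> P \<longrightarrow>
             x - y \<in> P \<and> x + y \<in> P) \<longleftrightarrow> one + one \<in> P)
       \<and> (one + one \<in> P \<longleftrightarrow> has_char (quot_carrier P) (quot_add P) (coset P 0) 2)"
proof -
  have hi: "hyperideal m P" using assms(3) unfolding sdf_absorbing_def by auto
  note h = hi_basic[OF hi]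
  have propr: "P \<noteq> UNIV" using assms(3) unfolding sdf_absorbing_def by auto
  have sdf: "\<And>x y. x \<noteq> 0 \<Longrightarrow> y \<noteq> 0 \<Longrightarrow> set_minus_h (m x x) (m y y) \<subseteq> P \<Longrightarrow> x - y \<in> P \<or> x + y \<in> P"
    using assms(3) unfolding sdf_absorbing_def by auto
  have strong: "\<And>D. hsum m D \<Longrightarrow> D \<inter> P \<noteq> {} \<Longrightarrow> D \<subseteq> P"
    using assms(4) unfolding strong_C_hyperideal_def by auto
  have ne: "\<And>x y. m x y \<noteq> {}" and distr: "\<And>x y z. m x (y + z) \<subseteq> set_plus_h (m x y) (m x z)"
    and neg: "\<And>x y. m x (- y) = uminus ` (m x y)"
    using assms(1) unfolding comm_mult_hyperring_def by auto
  have ideal: "\<And>r x. x \<in> P \<Longrightarrow> m r x \<subseteq> P" using hi unfolding hyperideal_def by auto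
  have idn: "\<And>x. x \<in> m x one" using assms(2) unfolding hyperring_identity_def by auto
  have prodm: "\<And>x y. hprod m (m x y)"
  proof -
    fix x y
    have "hprod m (hset_mult m {x} {y})" by (rule hprod.step[OF hprod.single])
    then show "hprod m (m x y)" unfolding hset_mult_def by simp
  qed
  have sum2: "\<And>x y z w. hsum m (set_plus_h (m x y) (m z w))"
    by (rule hsum.step[OF hsum.base[OF prodm] prodm])
  have two: "x + x \<in> P" if oo: "one + one \<in> P" for x
  proof -
    have s: "m x (one + one) \<subseteq> P" using ideal[OF oo] .
    obtain w where w: "w \<in> m x (one + one)" using ne by blast
    have "w \<in> set_plus_h (m x one) (m x one)" using distr w by blast
    then have "set_plus_h (m x one) (m x one) \<subseteq> P" using strong[OF sum2] w s by blast
    moreover have "x + x \<in> set_plus_h (m x one) (m x one)" unfolding set_plus_h_def using idn by blast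
    ultimately show ?thesis by blast
  qed
  have one0: "one \<noteq> 0"
  proof
    assume "one = 0"
    then have "\<And>x. x \<in> P" using idn ideal[OF h(1)] by blast
    then show False using propr by blast
  qed
  have oneP: "set_minus_h (m one one) (m one one) \<subseteq> P"
  proof -
    have eq: "set_minus_h (m one one) (m one one) = set_plus_h (m one one) (m one (- one))"
      unfolding set_minus_h_def set_plus_h_def neg by force
    obtain w where w: "w \<in> m one (one + - one)" using ne by blast
    have "w \<in> P" using w ideal[OF h(1)] by auto
    moreover have "w \<in> set_plus_h (m one one) (m one (- one))" using distr w by blast
    ultimately show ?thesis unfolding eq using strong[OF sum2] by blast
  qed
  have part1: "(\<forall>x y. x \<noteq> 0 \<longrightarrow> y \<noteq> 0 \<longrightarrow> set_minus_h (m x x) (m y y) \<subseteq> P \<longrightarrow>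
             x - y \<in> P \<and> x + y \<in> P) \<longleftrightarrow> one + one \<in> P"
  proof
    assume "\<forall>x y. x \<noteq> 0 \<longrightarrow> y \<noteq> 0 \<longrightarrow> set_minus_h (m x x) (m y y) \<subseteq> P \<longrightarrow>
             x - y \<in> P \<and> x + y \<in> P"
    then show "one + one \<in> P" using one0 oneP by blast
  next
    assume oo: "one + one \<in> P"
    show "\<forall>x y. x \<noteq> 0 \<longrightarrow> y \<noteq> 0 \<longrightarrow> set_minus_h (m x x) (m y y) \<subseteq> P \<longrightarrow>
             x - y \<in> P \<and> x + y \<in> P"
    proof (intro allI impI)
      fix x y assume "x \<noteq> 0" "y \<noteq> 0" "set_minus_h (m x x) (m y y) \<subseteq> P"
      then have d: "x - y \<in> P \<or> x + y \<in> P" using sdf by blast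
      have y2: "y + y \<in> P" using two[OF oo] .
      have "x + y = (x - y) + (y + y)" "x - y = (x + y) - (y + y)" by (simp_all add: algebra_simps)
      then show "x - y \<in> P \<and> x + y \<in> P" using d y2 h by metis
    qed
  qed
  have ns1: "\<And>A. nsmul_gen (quot_add P) (coset P 0) 1 A = set_plus_h A (coset P 0)"
    unfolding nsmul_gen_def quot_add_def by simp
  have ns2: "\<And>A. nsmul_gen (quot_add P) (coset P 0) 2 A = set_plus_h A (set_plus_h A (coset P 0))"
    unfolding nsmul_gen_def quot_add_def by (simp add: numeral_2_eq_2)
  have part2: "one + one \<in> P \<longleftrightarrow> has_char (quot_carrier P) (quot_add P) (coset P 0) 2"
  proof
    assume oo: "one + one \<in> P"
    have a: "\<forall>A\<in>quot_carrier P. nsmul_gen (quot_add P) (coset P 0) 2 A = coset P 0"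
      unfolding quot_carrier_def ns2 using coset_plus[OF hi] coset_zero_iff[OF hi] two[OF oo] by auto
    have b: "\<not> (\<forall>A\<in>quot_carrier P. nsmul_gen (quot_add P) (coset P 0) 1 A = coset P 0)"
    proof
      assume "\<forall>A\<in>quot_carrier P. nsmul_gen (quot_add P) (coset P 0) 1 A = coset P 0"
      then have "\<And>x. x \<in> P" unfolding quot_carrier_def ns1
        using coset_plus[OF hi] coset_zero_iff[OF hi] by auto
      then show False using propr by blast
    qed
    have c: "\<And>\<beta>::nat. 0 < \<beta> \<and> \<beta> < 2 \<Longrightarrow> \<beta> = 1" by auto
    show "has_char (quot_carrier P) (quot_add P) (coset P 0) 2"
      unfolding has_char_def
    proof (intro conjI allI impI)
      fix \<beta> :: nat assume "0 < \<beta> \<and> \<beta> < 2"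
      then have "\<beta> = 1" by auto
      then show "\<not> (\<forall>A\<in>quot_carrier P. nsmul_gen (quot_add P) (coset P 0) \<beta> A = coset P 0)"
        using b by simp
    qed (use a in auto)
  next
    assume "has_char (quot_carrier P) (quot_add P) (coset P 0) 2"
    then have "nsmul_gen (quot_add P) (coset P 0) 2 (coset P one) = coset P 0"
      unfolding has_char_def quot_carrier_def by auto
    then show "one + one \<in> P" unfolding ns2
      using coset_plus[OF hi] coset_zero_iff[OF hi] by auto
  qed
  show ?thesis using part1 part2 by blast
qed

end
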